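(* $\mathfrak{mc}(\mathsf{meager},\subseteq)=\operatorname{non}(\mathsf{meager})$ and $\mathfrak{mac}(\mathsf{meager}\setminus\{\emptyset\},\subseteq)=\mathfrak{c}$.
   Context: $\mathsf{meager}$ is the ideal of meager subsets of $2^\omega$, ordered by inclusion. For a poset $P$, a chain (antichain) is a set of pairwise comparable (pairwise incomparable) elements; $\mathfrak{mc}(P)$ and $\mathfrak{mac}(P)$ are the minimal cardinalities of a maximal (under inclusion) chain and of a maximal antichain, respectively. $\operatorname{non}(\mathsf{meager})$ is the minimal size of a non-meager subset of $2^\omega$. $\mathfrak{c}=2^{\aleph_0}$. *)

theory Defs
  imports "HOL-Analysis.Analysis" "HOL-Library.Equipollence"
begin

text \<open>The Cantor space 2^omega is the type nat => bool with its product topology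
  (bool carries the discrete topology in the library).\<close>

definition nowhere_dense :: "(nat \<Rightarrow> bool) set \<Rightarrow> bool" where
  "nowhere_dense A \<longleftrightarrow> interior (closure A) = {}"

definition meager :: "(nat \<Rightarrow> bool) set \<Rightarrow> bool" where
  "meager A \<longleftrightarrow> (\<exists>F. countable F \<and> (\<forall>N\<in>F. nowhere_dense N) \<and> A \<subseteq> \<Union>F)"

definition meager_ideal :: "(nat \<Rightarrow> bool) set set" where
  "meager_ideal = {A. meager A}"

definition is_chain :: "'a set set \<Rightarrow> 'a set set \<Rightarrow> bool" where
  "is_chain P C \<longleftrightarrow> C \<subseteq> P \<and> (\<forall>x\<in>C. \<forall>y\<in>C. x \<subseteq> y \<or> y \<subseteq> x)"

definition is_max_chain :: "'a set set \<Rightarrow> 'a set set \<Rightarrow> bool" where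
  "is_max_chain P C \<longleftrightarrow> is_chain P C \<and> (\<forall>D. is_chain P D \<and> C \<subseteq> D \<longrightarrow> D = C)"

definition is_antichain :: "'a set set \<Rightarrow> 'a set set \<Rightarrow> bool" where
  "is_antichain P C \<longleftrightarrow> C \<subseteq> P \<and> (\<forall>x\<in>C. \<forall>y\<in>C. x \<noteq> y \<longrightarrow> \<not> x \<subseteq> y \<and> \<not> y \<subseteq> x)"

definition is_max_antichain :: "'a set set \<Rightarrow> 'a set set \<Rightarrow> bool" where
  "is_max_antichain P C \<longleftrightarrow> is_antichain P C \<and> (\<forall>D. is_antichain P D \<and> C \<subseteq> D \<longrightarrow> D = C)"

end

theory Submission
  imports Defs
begin


definition cyl :: "bool list \<Rightarrow> (nat \<Rightarrow> bool) set" where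
  "cyl t = {f. \<forall>i<length t. f i = t ! i}"

lemma open_cyl: "open (cyl t)"
proof -
  have "cyl t = {f. \<forall>i\<in>{..<length t}. f (id i) \<in> {t ! i}}" by (auto simp: cyl_def)
  also have "open \<dots>" by (rule product_topology_basis') (auto simp: open_discrete)
  finally show ?thesis .
qed

lemma cyl_append_sub: "cyl (t @ u) \<subseteq> cyl t"
  by (auto simp: cyl_def nth_append)

lemma in_cyl_map: "f \<in> cyl (map f [0..<n])"
  by (auto simp: cyl_def)

lemma cyl_nonempty: "\<exists>f. f \<in> cyl t"
  by (rule exI[of _ "\<lambda>i. if i < length t then t ! i else False"]) (auto simp: cyl_def)

lemma open_contains_cyl:
  assumes "open U" "x \<in> U"
  shows "\<exists>n. cyl (map x [0..<n]) \<subseteq> U"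
proof -
  have "openin (product_topology (\<lambda>i. euclidean) UNIV) U" using assms unfolding open_fun_def by auto
  from product_topology_open_contains_basis[OF this assms(2)]
  obtain X where H: "x \<in> (\<Pi>\<^sub>E i\<in>UNIV. X i)" "finite {i. X i \<noteq> UNIV}" "(\<Pi>\<^sub>E i\<in>UNIV. X i) \<subseteq> U"
    by auto
  obtain n where n: "\<forall>i\<in>{i. X i \<noteq> UNIV}. i < n"
    using H(2) finite_nat_bounded by (metis lessThan_iff subset_eq)
  have "cyl (map x [0..<n]) \<subseteq> (\<Pi>\<^sub>E i\<in>UNIV. X i)"
  proof
    fix y assume y: "y \<in> cyl (map x [0..<n])"
    have "y i \<in> X i" for i
    proof (cases "i < n")
      case True then have "y i = x i" using y by (auto simp: cyl_def)
      then show ?thesis using H(1) by auto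
    next
      case False then show ?thesis using n by auto
    qed
    then show "y \<in> (\<Pi>\<^sub>E i\<in>UNIV. X i)" by auto
  qed
  then show ?thesis using H(3) by blast
qed

lemma cyl_map_extend:
  assumes "x \<in> cyl t"
  shows "\<exists>u. map x [0..<max n (length t)] = t @ u"
proof -
  have "map x [0..<max n (length t)] = map x [0..<length t] @ map x [length t..<max n (length t)]"
    by (metis le_add_diff_inverse map_append max.cobounded2 upt_add_eq_append zero_le)
  moreover have "map x [0..<length t] = t" using assms by (auto simp: cyl_def intro: nth_equalityI)
  ultimately show ?thesis by auto
qed

lemma nd_imp:
  assumes "nowhere_dense A"
  shows "\<exists>u. cyl (t @ u) \<inter> A = {}"
proof (rule ccontr)
  assume H: "\<nexists>u. cyl (t @ u) \<inter> A = {}"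
  have "cyl t \<subseteq> closure A"
  proof
    fix y assume y: "y \<in> cyl t"
    show "y \<in> closure A"
    proof (rule ccontr)
      assume "y \<notin> closure A"
      then have "open (- closure A)" "y \<in> - closure A" by auto
      then obtain n where n: "cyl (map y [0..<n]) \<subseteq> - closure A" using open_contains_cyl by blast
      obtain u where u: "map y [0..<max n (length t)] = t @ u" using cyl_map_extend[OF y] by blast
      have "cyl (map y [0..<max n (length t)]) \<subseteq> cyl (map y [0..<n])"
      proof -
        have "map y [0..<max n (length t)] = map y [0..<n] @ map y [n..<max n (length t)]"
          by (metis le_add_diff_inverse map_append max.cobounded1 upt_add_eq_append zero_le)
        then show ?thesis by (metis cyl_append_sub)
      qed
      with n u have "cyl (t @ u) \<inter> A = {}" using closure_subset by fastforce
      with H show False by blast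
    qed
  qed
  then have "cyl t \<subseteq> interior (closure A)" using open_cyl interior_maximal by blast
  with assms cyl_nonempty show False unfolding nowhere_dense_def by blast
qed

lemma nd_intro:
  assumes "\<And>t. \<exists>u. cyl (t @ u) \<inter> A = {}"
  shows "nowhere_dense A"
  unfolding nowhere_dense_def
proof (rule ccontr)
  assume "interior (closure A) \<noteq> {}"
  then obtain y where y: "y \<in> interior (closure A)" by blast
  then obtain n where n: "cyl (map y [0..<n]) \<subseteq> interior (closure A)"
    using open_contains_cyl open_interior by blast
  obtain u where u: "cyl (map y [0..<n] @ u) \<inter> A = {}" using assms by blast
  have "cyl (map y [0..<n] @ u) \<inter> closure A = {}"
    using open_cyl u by (simp add: open_Int_closure_eq_empty)
  moreover have "cyl (map y [0..<n] @ u) \<subseteq> closure A"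
    using n cyl_append_sub interior_subset by blast
  ultimately show False using cyl_nonempty by blast
qed



definition Sl :: "bool list list \<Rightarrow> bool list \<Rightarrow> bool list" where
  "Sl us \<sigma> = concat (map (\<lambda>i. \<sigma> ! i # us ! i @ [False]) [0..<length \<sigma>])"

definition S :: "(nat \<Rightarrow> bool list) \<Rightarrow> bool list \<Rightarrow> bool list" where
  "S u \<sigma> = concat (map (\<lambda>i. \<sigma> ! i # u i @ [False]) [0..<length \<sigma>])"

lemma common_ext:
  assumes "finite T" "nowhere_dense N"
  shows "\<exists>w. \<forall>p\<in>T. cyl (p @ w) \<inter> N = {}"
  using assms(1)
proof (induction T rule: finite_induct)
  case empty then show ?case by auto
next
  case (insert p T)
  then obtain w where w: "\<forall>q\<in>T. cyl (q @ w) \<inter> N = {}" by blast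
  obtain v where v: "cyl ((p @ w) @ v) \<inter> N = {}" using nd_imp[OF assms(2)] by blast
  have "\<forall>q\<in>insert p T. cyl (q @ w @ v) \<inter> N = {}"
  proof
    fix q assume "q \<in> insert p T"
    then show "cyl (q @ w @ v) \<inter> N = {}"
    proof
      assume "q = p" then show ?thesis using v by simp
    next
      assume "q \<in> T"
      then have "cyl (q @ w) \<inter> N = {}" using w by blast
      moreover have "cyl ((q @ w) @ v) \<subseteq> cyl (q @ w)" by (rule cyl_append_sub)
      ultimately show ?thesis by auto
    qed
  qed
  then show ?case by blast
qed

definition pick :: "(nat \<Rightarrow> (nat \<Rightarrow> bool) set) \<Rightarrow> nat \<Rightarrow> bool list list \<Rightarrow> bool list" where
  "pick N i us = (SOME w. \<forall>\<sigma> b. length \<sigma> = i \<longrightarrow> cyl (Sl us \<sigma> @ b # w) \<inter> N i = {})"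

primrec blocks :: "(nat \<Rightarrow> (nat \<Rightarrow> bool) set) \<Rightarrow> nat \<Rightarrow> bool list list" where
  "blocks N 0 = []"
| "blocks N (Suc i) = blocks N i @ [pick N i (blocks N i)]"

definition ub :: "(nat \<Rightarrow> (nat \<Rightarrow> bool) set) \<Rightarrow> nat \<Rightarrow> bool list" where
  "ub N i = blocks N (Suc i) ! i"

lemma length_blocks: "length (blocks N i) = i"
  by (induction i) auto

lemma blocks_nth: "j < i \<Longrightarrow> blocks N i ! j = ub N j"
proof (induction i)
  case 0 then show ?case by simp
next
  case (Suc i)
  then show ?case
    by (cases "j < i") (auto simp: nth_append length_blocks ub_def less_Suc_eq)
qed

lemma Sl_blocks: "length \<sigma> \<le> i \<Longrightarrow> Sl (blocks N i) \<sigma> = S (ub N) \<sigma>"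
  unfolding Sl_def S_def by (intro arg_cong[where f=concat] map_cong) (auto simp: blocks_nth)

lemma pick_spec:
  assumes "\<forall>i. nowhere_dense (N i)"
  shows "length \<sigma> = i \<Longrightarrow> cyl (S (ub N) \<sigma> @ b # ub N i) \<inter> N i = {}"
proof -
  assume len: "length \<sigma> = i"
  let ?T = "(\<lambda>(\<sigma>, b). Sl (blocks N i) \<sigma> @ [b]) ` ({\<sigma>. length \<sigma> = i} \<times> UNIV)"
  have fl: "finite {\<sigma>::bool list. length \<sigma> = i}"
    using finite_lists_length_eq[of "UNIV::bool set" i] by simp
  have "finite ?T" by (intro finite_imageI finite_cartesian_product fl) auto
  from common_ext[OF this] assms obtain w where w: "\<forall>p\<in>?T. cyl (p @ w) \<inter> N i = {}" by blast
  have "\<exists>w. \<forall>\<sigma> b. length \<sigma> = i \<longrightarrow> cyl (Sl (blocks N i) \<sigma> @ b # w) \<inter> N i = {}"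
  proof (intro exI allI impI)
    fix \<sigma> :: "bool list" and b assume "length \<sigma> = i"
    then have "Sl (blocks N i) \<sigma> @ [b] \<in> ?T" by force
    with w have "cyl ((Sl (blocks N i) \<sigma> @ [b]) @ w) \<inter> N i = {}" by blast
    then show "cyl (Sl (blocks N i) \<sigma> @ b # w) \<inter> N i = {}" by simp
  qed
  then have "\<forall>\<sigma> b. length \<sigma> = i \<longrightarrow> cyl (Sl (blocks N i) \<sigma> @ b # pick N i (blocks N i)) \<inter> N i = {}"
    unfolding pick_def by (rule someI_ex)
  moreover have "pick N i (blocks N i) = ub N i" by (simp add: ub_def nth_append length_blocks)
  ultimately have H: "\<forall>\<sigma> b. length \<sigma> = i \<longrightarrow> cyl (Sl (blocks N i) \<sigma> @ b # ub N i) \<inter> N i = {}"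
    by simp
  then have "cyl (Sl (blocks N i) \<sigma> @ b # ub N i) \<inter> N i = {}" using len by blast
  then show ?thesis using Sl_blocks[of \<sigma> i N] len by simp
qed

lemma S_snoc: "S u (\<sigma> @ [b]) = S u \<sigma> @ b # u (length \<sigma>) @ [False]"
  unfolding S_def by (auto simp: nth_append intro!: arg_cong[where f=concat] map_cong)

definition Lnn :: "(nat \<Rightarrow> bool list) \<Rightarrow> nat \<Rightarrow> nat" where
  "Lnn u n = (\<Sum>i<n. length (u i) + 2)"

lemma length_S: "length (S u \<sigma>) = Lnn u (length \<sigma>)"
  unfolding S_def Lnn_def by (simp add: length_concat sum_list_sum_nth atLeast0LessThan)

lemma Lnn_ge: "2 * n \<le> Lnn u n"
  unfolding Lnn_def by (induction n) auto

lemma Lnn_Suc: "Lnn u (Suc n) = Lnn u n + length (u n) + 2"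
  unfolding Lnn_def by simp

lemma map_upt_Suc: "map x [0..<Suc n] = map x [0..<n] @ [x n]" by simp

lemma S_prefix: "\<exists>r. S u (map x [0..<n + d]) = S u (map x [0..<n]) @ r"
proof (induction d)
  case 0 then show ?case by simp
next
  case (Suc d)
  then obtain r where "S u (map x [0..<n + d]) = S u (map x [0..<n]) @ r" by blast
  then show ?case by (simp add: S_snoc)
qed

definition gmap :: "(nat \<Rightarrow> bool list) \<Rightarrow> (nat \<Rightarrow> bool) \<Rightarrow> (nat \<Rightarrow> bool)" where
  "gmap u x k = S u (map x [0..<Suc k]) ! k"

lemma gmap_cyl: "gmap u x \<in> cyl (S u (map x [0..<n]))"
  unfolding cyl_def
proof (intro CollectI allI impI)
  fix k assume k: "k < length (S u (map x [0..<n]))"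
  let ?m = "max n (Suc k)"
  obtain r1 where r1: "S u (map x [0..<?m]) = S u (map x [0..<n]) @ r1"
    using S_prefix[of u x n "?m - n"] by auto
  obtain r2 where r2: "S u (map x [0..<?m]) = S u (map x [0..<Suc k]) @ r2"
    using S_prefix[of u x "Suc k" "?m - Suc k"] by auto
  have k2: "k < length (S u (map x [0..<Suc k]))"
    using Lnn_ge[of "Suc k" u] by (simp add: length_S)
  have "gmap u x k = S u (map x [0..<?m]) ! k" using r2 k2 by (simp add: gmap_def nth_append)
  also have "\<dots> = S u (map x [0..<n]) ! k" using r1 k by (simp add: nth_append)
  finally show "gmap u x k = S u (map x [0..<n]) ! k" .
qed

lemma gmap_Suc_cyl: "gmap u x \<in> cyl (S u (map x [0..<i]) @ x i # u i @ [False])"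
  using gmap_cyl[of u x "Suc i"] by (simp add: S_snoc)

lemma gmap_at: "gmap u x (Lnn u i) = x i"
proof -
  have "Lnn u i < length (S u (map x [0..<i]) @ x i # u i @ [False])" by (simp add: length_S)
  then show ?thesis using gmap_Suc_cyl[of u x i] unfolding cyl_def by (simp add: nth_append length_S)
qed

lemma gmap_false: "gmap u x (Lnn u i + length (u i) + 1) = False"
proof -
  have "Lnn u i + length (u i) + 1 < length (S u (map x [0..<i]) @ x i # u i @ [False])" by (simp add: length_S)
  then show ?thesis using gmap_Suc_cyl[of u x i] unfolding cyl_def by (simp add: nth_append length_S)
qed

lemma gmap_inj: "inj (gmap u)"
proof (rule injI, rule ccontr)
  fix x y assume eq: "gmap u x = gmap u y" and ne: "x \<noteq> y"
  then obtain i where "x i \<noteq> y i" by auto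
  define j where "j = (LEAST i. x i \<noteq> y i)"
  have j: "x j \<noteq> y j" using \<open>x i \<noteq> y i\<close> unfolding j_def by (rule LeastI)
  from j have "gmap u x (Lnn u j) \<noteq> gmap u y (Lnn u j)" by (simp add: gmap_at)
  with eq show False by simp
qed

lemma gmap_nd: "nowhere_dense (range (gmap u))"
proof (rule nd_intro)
  fix t :: "bool list"
  let ?p = "Lnn u (length t) + length (u (length t)) + 1"
  have ge: "?p \<ge> length t" using Lnn_ge[of "length t" u] by simp
  let ?w = "replicate (?p - length t) False @ [True]"
  have "cyl (t @ ?w) \<inter> range (gmap u) = {}"
  proof (rule ccontr)
    assume "cyl (t @ ?w) \<inter> range (gmap u) \<noteq> {}"
    then obtain x where x: "gmap u x \<in> cyl (t @ ?w)" by blast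
    have "?p < length (t @ ?w)" using ge by simp
    then have "gmap u x ?p = (t @ ?w) ! ?p" using x unfolding cyl_def by blast
    also have "\<dots> = True" using ge by (simp add: nth_append)
    finally show False using gmap_false[of u x "length t"] by simp
  qed
  then show "\<exists>w. cyl (t @ w) \<inter> range (gmap u) = {}" by blast
qed

lemma gmap_avoid:
  assumes "\<forall>i. nowhere_dense (N i)"
  shows "gmap (ub N) x \<notin> N i"
proof -
  have "gmap (ub N) x \<in> cyl ((S (ub N) (map x [0..<i]) @ x i # ub N i) @ [False])"
    using gmap_Suc_cyl[of "ub N" x i] by simp
  then have "gmap (ub N) x \<in> cyl (S (ub N) (map x [0..<i]) @ x i # ub N i)"
    using cyl_append_sub by blast
  with pick_spec[OF assms, of "map x [0..<i]" i "x i"] show ?thesis by auto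
qed

lemma nd_empty: "nowhere_dense {}"
  by (rule nd_intro) auto

lemma meager_avoid:
  assumes "meager M"
  shows "\<exists>P. meager P \<and> P \<inter> M = {} \<and> P \<approx> (UNIV :: (nat \<Rightarrow> bool) set)"
proof -
  obtain F where F: "countable F" "\<forall>N\<in>F. nowhere_dense N" "M \<subseteq> \<Union>F"
    using assms unfolding meager_def by blast
  define N where "N i = (if F = {} then {} else from_nat_into F i)" for i
  have ndN: "\<forall>i. nowhere_dense (N i)"
  proof
    fix i show "nowhere_dense (N i)"
    proof (cases "F = {}")
      case True then show ?thesis using nd_empty by (simp add: N_def)
    next
      case False
      then have "from_nat_into F i \<in> F" by (rule from_nat_into)
      then show ?thesis using F(2) False by (simp add: N_def)
    qed
  qed
  have sub: "\<Union>F \<subseteq> \<Union>(range N)"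
  proof
    fix y assume "y \<in> \<Union>F"
    then obtain A where "A \<in> F" "y \<in> A" by blast
    then obtain n where "from_nat_into F n = A" using from_nat_into_surj[OF F(1)] by blast
    then have "N n = A" using \<open>A \<in> F\<close> by (auto simp: N_def)
    then show "y \<in> \<Union>(range N)" using \<open>y \<in> A\<close> by blast
  qed
  let ?P = "range (gmap (ub N))"
  have mP: "meager ?P" unfolding meager_def
  proof (intro exI[of _ "{?P}"] conjI)
    show "countable {?P}" by simp
    show "\<forall>N\<in>{?P}. nowhere_dense N" using gmap_nd by simp
    show "?P \<subseteq> \<Union>{?P}" by simp
  qed
  have nm: "gmap (ub N) x \<notin> M" for x
  proof
    assume "gmap (ub N) x \<in> M"
    then have "gmap (ub N) x \<in> \<Union>(range N)" using subset_trans[OF F(3) sub] by (rule rev_subsetD)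
    then obtain i where "gmap (ub N) x \<in> N i" by (rule UN_E)
    then show False using gmap_avoid[OF ndN, of x i] by simp
  qed
  have dis: "?P \<inter> M = {}" using nm by (auto simp: disjoint_iff)
  have eq: "?P \<approx> (UNIV :: (nat \<Rightarrow> bool) set)"
  proof -
    have "bij_betw (gmap (ub N)) UNIV ?P" by (simp add: bij_betw_def gmap_inj)
    then have "(UNIV :: (nat \<Rightarrow> bool) set) \<approx> ?P" unfolding eqpoll_def by blast
    then show ?thesis by (rule eqpoll_sym)
  qed
  show ?thesis by (rule exI[of _ ?P], intro conjI mP dis eq)
qed

lemma not_meager_UNIV: "\<not> meager (UNIV :: (nat \<Rightarrow> bool) set)"
proof
  assume "meager (UNIV :: (nat \<Rightarrow> bool) set)"
  then obtain P :: "(nat \<Rightarrow> bool) set" where "P \<inter> UNIV = {}" "P \<approx> (UNIV :: (nat \<Rightarrow> bool) set)" using meager_avoid[OF \<open>meager UNIV\<close>] by blast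
  then have "P = {}" by simp
  then show False using eqpoll_sym[OF \<open>P \<approx> UNIV\<close>] by simp
qed

lemma meager_subset:
  assumes "meager B" "A \<subseteq> B" shows "meager A"
proof -
  obtain F where F: "countable F" "\<forall>N\<in>F. nowhere_dense N" "B \<subseteq> \<Union> F"
    using assms(1) unfolding meager_def by blast
  have "A \<subseteq> \<Union> F" using assms(2) F(3) by (rule subset_trans)
  then show ?thesis unfolding meager_def using F(1,2) by blast
qed

lemma meager_Un:
  assumes "meager A" "meager B" shows "meager (A \<union> B)"
proof -
  obtain F where F: "countable F" "\<forall>N\<in>F. nowhere_dense N" "A \<subseteq> \<Union> F"
    using assms(1) unfolding meager_def by blast
  obtain G where G: "countable G" "\<forall>N\<in>G. nowhere_dense N" "B \<subseteq> \<Union> G"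
    using assms(2) unfolding meager_def by blast
  show ?thesis unfolding meager_def
  proof (intro exI[of _ "F \<union> G"] conjI)
    show "countable (F \<union> G)" using F(1) G(1) by simp
    show "\<forall>N\<in>F \<union> G. nowhere_dense N" using F(2) G(2) by blast
    have "A \<union> B \<subseteq> \<Union>F \<union> \<Union>G" using F(3) G(3) by (rule Un_mono)
    then show "A \<union> B \<subseteq> \<Union>(F \<union> G)" by (simp add: Union_Un_distrib)
  qed
qed

lemma nd_singleton: "nowhere_dense {x}"
proof (rule nd_intro)
  fix t show "\<exists>u. cyl (t @ u) \<inter> {x} = {}"
  proof (rule exI[of _ "[\<not> x (length t)]"])
    have "x \<notin> cyl (t @ [\<not> x (length t)])"
    proof
      assume "x \<in> cyl (t @ [\<not> x (length t)])"
      then have "x (length t) = (t @ [\<not> x (length t)]) ! length t"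
        unfolding cyl_def mem_Collect_eq by (metis length_append_singleton lessI)
      then show False by simp
    qed
    then show "cyl (t @ [\<not> x (length t)]) \<inter> {x} = {}" by simp
  qed
qed

lemma meager_singleton: "meager {x}"
  unfolding meager_def
proof (intro exI[of _ "{{x}}"] conjI)
  show "countable {{x}}" by simp
  show "\<forall>N\<in>{{x}}. nowhere_dense N" using nd_singleton by simp
  show "{x} \<subseteq> \<Union>{{x}}" by simp
qed

lemma meager_insert:
  assumes "meager A" shows "meager (insert x A)"
proof -
  have "meager ({x} \<union> A)" by (rule meager_Un[OF meager_singleton assms])
  then show ?thesis by simp
qed



unbundle cardinal_syntax

lemma lepoll_card: "A \<lesssim> B \<longleftrightarrow> |A| \<le>o |B|"
  unfolding lepoll_def card_of_ordLeq[symmetric] by simp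

lemma not_lepoll_less: "\<not> A \<lesssim> B \<longleftrightarrow> |B| <o |A|"
  unfolding lepoll_card using ordLess_or_ordLeq[OF card_of_Well_order card_of_Well_order]
    not_ordLess_ordLeq by blast

lemma maxchain_in:
  assumes "is_max_chain meager_ideal C" "meager X" "\<forall>c\<in>C. c \<subseteq> X \<or> X \<subseteq> c"
  shows "X \<in> C"
proof -
  have "is_chain meager_ideal (insert X C)"
    using assms unfolding is_max_chain_def is_chain_def meager_ideal_def by auto
  then have "insert X C = C" using assms(1) unfolding is_max_chain_def by blast
  then show ?thesis by blast
qed

lemma maxchain_sub: "is_max_chain meager_ideal C \<Longrightarrow> c \<in> C \<Longrightarrow> meager c"
  unfolding is_max_chain_def is_chain_def meager_ideal_def by auto

lemma maxchain_cmp: "is_max_chain meager_ideal C \<Longrightarrow> c \<in> C \<Longrightarrow> d \<in> C \<Longrightarrow> c \<subseteq> d \<or> d \<subseteq> c"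
  unfolding is_max_chain_def is_chain_def by auto

lemma maxchain_union_nonmeager:
  assumes C: "is_max_chain meager_ideal C"
  shows "\<not> meager (\<Union>C)"
proof
  assume m: "meager (\<Union>C)"
  then have "\<Union>C \<noteq> UNIV" using not_meager_UNIV by auto
  then obtain y where y: "y \<notin> \<Union>C" by blast
  have "insert y (\<Union>C) \<in> C"
    using maxchain_in[OF C meager_insert[OF m]] by blast
  with y show False by blast
qed

lemma maxchain_union_lepoll:
  assumes C: "is_max_chain meager_ideal C"
  shows "\<Union>C \<lesssim> C"
proof -
  define cx where "cx x = \<Inter>{c\<in>C. x \<in> c}" for x
  have cxC: "cx x \<in> C" if x: "x \<in> \<Union>C" for x
  proof -
    obtain c0 where c0: "c0 \<in> C" "x \<in> c0" using x by blast
    have "cx x \<subseteq> c0" using c0 by (auto simp: cx_def)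
    then have "meager (cx x)" by (rule meager_subset[OF maxchain_sub[OF C c0(1)]])
    moreover have "\<forall>e\<in>C. e \<subseteq> cx x \<or> cx x \<subseteq> e"
    proof
      fix e assume e: "e \<in> C"
      show "e \<subseteq> cx x \<or> cx x \<subseteq> e"
      proof (cases "x \<in> e")
        case True then show ?thesis using e by (auto simp: cx_def)
      next
        case False
        have "e \<subseteq> c" if "c \<in> C" "x \<in> c" for c
          using maxchain_cmp[OF C e that(1)] False that(2) by blast
        then show ?thesis by (auto simp: cx_def)
      qed
    qed
    ultimately show ?thesis using maxchain_in[OF C] by blast
  qed
  have xin: "x \<in> cx x" if "x \<in> \<Union>C" for x using that by (auto simp: cx_def)
  have dC: "cx x - {x} \<in> C" if x: "x \<in> \<Union>C" for x
  proof -
    have "meager (cx x - {x})" by (rule meager_subset[OF maxchain_sub[OF C cxC[OF x]]]) auto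
    moreover have "\<forall>e\<in>C. e \<subseteq> cx x - {x} \<or> cx x - {x} \<subseteq> e"
    proof
      fix e assume e: "e \<in> C"
      show "e \<subseteq> cx x - {x} \<or> cx x - {x} \<subseteq> e"
      proof (cases "x \<in> e")
        case True then have "cx x \<subseteq> e" using e by (auto simp: cx_def)
        then show ?thesis by blast
      next
        case False
        then have "\<not> cx x \<subseteq> e" using xin[OF x] by blast
        then have "e \<subseteq> cx x" using maxchain_cmp[OF C e cxC[OF x]] by blast
        then show ?thesis using False by blast
      qed
    qed
    ultimately show ?thesis using maxchain_in[OF C] by blast
  qed
  have "inj_on cx (\<Union>C)"
  proof (rule inj_onI, rule ccontr)
    fix x y assume x: "x \<in> \<Union>C" and y: "y \<in> \<Union>C" and eq: "cx x = cx y" and ne: "x \<noteq> y"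
    have "y \<in> cx x - {x}" using xin[OF y] eq ne by auto
    then have "cx y \<subseteq> cx x - {x}" using dC[OF x] by (auto simp: cx_def)
    then show False using eq xin[OF x] by auto
  qed
  moreover have "cx ` \<Union>C \<subseteq> C" using cxC by blast
  ultimately show ?thesis unfolding lepoll_def by blast
qed

lemma minimal_nonmeager:
  obtains N :: "(nat \<Rightarrow> bool) set" where "\<not> meager N" "\<And>N'. \<not> meager N' \<Longrightarrow> N \<lesssim> N'"
proof -
  have wf: "wf (inv_image ordLess (card_of :: (nat \<Rightarrow> bool) set \<Rightarrow> _))"
    by (rule wf_inv_image[OF wf_ordLess])
  have "UNIV \<in> {X :: (nat \<Rightarrow> bool) set. \<not> meager X}" using not_meager_UNIV by simp
  from wfE_min[OF wf this] obtain N where N: "N \<in> {X. \<not> meager X}"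
    and min: "\<And>y. (y, N) \<in> inv_image ordLess card_of \<Longrightarrow> y \<notin> {X. \<not> meager X}" by blast
  show ?thesis
  proof (rule that)
    show "\<not> meager N" using N by simp
    fix N' :: "(nat \<Rightarrow> bool) set" assume "\<not> meager N'"
    then have "\<not> |N'| <o |N|" using min by auto
    then show "N \<lesssim> N'" using not_lepoll_less by blast
  qed
qed



unbundle cardinal_syntax

lemma chain_exists:
  fixes N :: "(nat \<Rightarrow> bool) set"
  assumes N: "\<not> meager N" and min: "\<And>N'. \<not> meager N' \<Longrightarrow> N \<lesssim> N'"
  shows "\<exists>C. is_max_chain meager_ideal C \<and> C \<lesssim> N"
proof -
  define r where "r = |N|"
  have wo: "well_order_on N r" unfolding r_def by (rule card_of_well_order_on)
  have Fr: "Field r = N" unfolding r_def by (rule Field_card_of)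
  have tr: "trans r" and an: "antisym r" and rf: "refl_on N r" and tot: "total_on N r"
    and wf: "wf (r - Id)"
    using wo unfolding order_on_defs by auto
  have inN1: "a \<in> N" if "(a, b) \<in> r" for a b using that Fr by (metis FieldI1)
  have inN2: "b \<in> N" if "(a, b) \<in> r" for a b using that Fr by (metis FieldI2)
  have refl: "(a, a) \<in> r" if "a \<in> N" for a using rf that unfolding refl_on_def by blast
  have muS: "meager (underS r a)" if a: "a \<in> N" for a
  proof (rule ccontr)
    assume "\<not> meager (underS r a)"
    then have "N \<lesssim> underS r a" by (rule min)
    moreover have "|underS r a| <o |N|"
      unfolding r_def by (rule card_of_underS[OF card_of_Card_order]) (simp add: Field_card_of a)
    ultimately show False using not_lepoll_less[of N "underS r a"] by simp
  qed
  define C where "C = {S. S \<subseteq> N \<and> meager S \<and> (\<forall>x\<in>S. \<forall>y. (y, x) \<in> r \<longrightarrow> y \<in> S)}"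
  have under_in: "under r a \<in> C" if a: "a \<in> N" for a
  proof -
    have "under r a \<subseteq> N" using inN1 unfolding under_def by blast
    moreover have "meager (under r a)"
    proof -
      have "under r a \<subseteq> insert a (underS r a)" unfolding under_def underS_def by blast
      then show ?thesis by (rule meager_subset[OF meager_insert[OF muS[OF a]]])
    qed
    moreover have "\<forall>x\<in>under r a. \<forall>y. (y, x) \<in> r \<longrightarrow> y \<in> under r a"
      using tr unfolding under_def trans_def by blast
    ultimately show ?thesis unfolding C_def by blast
  qed
  have a_under: "a \<in> under r a" if "a \<in> N" for a using refl[OF that] unfolding under_def by blast
  have Cm: "S \<in> C \<Longrightarrow> meager S" for S unfolding C_def by blast
  have Cs: "S \<in> C \<Longrightarrow> S \<subseteq> N" for S unfolding C_def by blast
  have Cd: "S \<in> C \<Longrightarrow> x \<in> S \<Longrightarrow> (y, x) \<in> r \<Longrightarrow> y \<in> S" for S x y unfolding C_def by blast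
  have chain: "is_chain meager_ideal C"
    unfolding is_chain_def
  proof (intro conjI ballI)
    show "C \<subseteq> meager_ideal" using Cm unfolding meager_ideal_def by blast
    fix S T assume S: "S \<in> C" and T: "T \<in> C"
    show "S \<subseteq> T \<or> T \<subseteq> S"
    proof (rule ccontr)
      assume "\<not> (S \<subseteq> T \<or> T \<subseteq> S)"
      then obtain x y where x: "x \<in> S" "x \<notin> T" and y: "y \<in> T" "y \<notin> S" by blast
      have "x \<in> N" "y \<in> N" using x y Cs[OF S] Cs[OF T] by blast+
      moreover have "x \<noteq> y" using x y by blast
      ultimately have "(x, y) \<in> r \<or> (y, x) \<in> r" using tot unfolding total_on_def by blast
      then show False using Cd[OF T y(1)] Cd[OF S x(1)] x y by blast
    qed
  qed
  have maxc: "is_max_chain meager_ideal C"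
    unfolding is_max_chain_def
  proof (intro conjI allI impI chain)
    fix D assume D: "is_chain meager_ideal D \<and> C \<subseteq> D"
    show "D = C"
    proof
      show "C \<subseteq> D" using D by blast
      show "D \<subseteq> C"
      proof
        fix M assume M: "M \<in> D"
        have mM: "meager M" using D M unfolding is_chain_def meager_ideal_def by blast
        have cmp: "S \<subseteq> M \<or> M \<subseteq> S" if "S \<in> C" for S
          using D M that unfolding is_chain_def by blast
        have MN: "M \<subseteq> N"
        proof (cases "\<forall>a\<in>N. under r a \<subseteq> M")
          case True
          then have "N \<subseteq> M" using a_under by blast
          then have "meager N" by (rule meager_subset[OF mM])
          then show ?thesis using N by blast
        next
          case False
          then obtain a where a: "a \<in> N" "\<not> under r a \<subseteq> M" by blast
          then have "M \<subseteq> under r a" using cmp[OF under_in[OF a(1)]] by blast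
          then show ?thesis using Cs[OF under_in[OF a(1)]] by blast
        qed
        have "\<forall>x\<in>M. \<forall>y. (y, x) \<in> r \<longrightarrow> y \<in> M"
        proof (intro ballI allI impI)
          fix x y assume x: "x \<in> M" and yx: "(y, x) \<in> r"
          have y: "y \<in> N" using inN1[OF yx] .
          show "y \<in> M"
          proof (cases "under r y \<subseteq> M")
            case True then show ?thesis using a_under[OF y] by blast
          next
            case False
            then have "M \<subseteq> under r y" using cmp[OF under_in[OF y]] by blast
            then have "(x, y) \<in> r" using x unfolding under_def by blast
            then have "x = y" using yx an unfolding antisym_def by blast
            then show ?thesis using x by simp
          qed
        qed
        then show "M \<in> C" unfolding C_def using MN mM by blast
      qed
    qed
  qed
  have "C \<subseteq> underS r ` N"
  proof
    fix S assume S: "S \<in> C"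
    have "N - S \<noteq> {}"
    proof
      assume "N - S = {}"
      then have "N \<subseteq> S" by blast
      then have "meager N" by (rule meager_subset[OF Cm[OF S]])
      then show False using N by blast
    qed
    then obtain x where x: "x \<in> N - S" by blast
    obtain m where m: "m \<in> N - S" and mmin: "\<And>y. (y, m) \<in> r - Id \<Longrightarrow> y \<notin> N - S"
      using wfE_min[OF wf x] by blast
    have "S = underS r m"
    proof
      show "S \<subseteq> underS r m"
      proof
        fix y assume y: "y \<in> S"
        have yN: "y \<in> N" using y Cs[OF S] by blast
        have ne: "y \<noteq> m" using y m by blast
        have "(y, m) \<in> r \<or> (m, y) \<in> r" using tot yN m ne unfolding total_on_def by blast
        moreover have "(m, y) \<notin> r" using Cd[OF S y] m by blast
        ultimately show "y \<in> underS r m" using ne unfolding underS_def by blast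
      qed
      show "underS r m \<subseteq> S"
      proof
        fix y assume y: "y \<in> underS r m"
        then have ym: "(y, m) \<in> r" "y \<noteq> m" unfolding underS_def by blast+
        then have "(y, m) \<in> r - Id" by blast
        then have "y \<notin> N - S" by (rule mmin)
        then show "y \<in> S" using inN1[OF ym(1)] by blast
      qed
    qed
    then show "S \<in> underS r ` N" using m by blast
  qed
  then have "C \<lesssim> underS r ` N" by (rule subset_imp_lepoll)
  also have "underS r ` N \<lesssim> N" by (rule image_lepoll)
  finally show ?thesis using maxc by blast
qed

abbreviation "MP \<equiv> meager_ideal - {{}}"

lemma sing_max: "is_max_antichain MP ((\<lambda>x. {x}) ` (UNIV :: (nat \<Rightarrow> bool) set))"
  unfolding is_max_antichain_def
proof (intro conjI allI impI)
  show anti: "is_antichain MP ((\<lambda>x. {x}) ` (UNIV :: (nat \<Rightarrow> bool) set))"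
    unfolding is_antichain_def
  proof (intro conjI ballI impI)
    show "(\<lambda>x. {x}) ` (UNIV :: (nat \<Rightarrow> bool) set) \<subseteq> MP"
    proof
      fix s assume "s \<in> (\<lambda>x. {x}) ` (UNIV :: (nat \<Rightarrow> bool) set)"
      then obtain a where "s = {a}" by (rule imageE) simp
      then show "s \<in> MP" using meager_singleton[of a] unfolding meager_ideal_def by simp
    qed
    fix s t assume s: "s \<in> (\<lambda>x. {x}) ` (UNIV :: (nat \<Rightarrow> bool) set)"
      and t: "t \<in> (\<lambda>x. {x}) ` (UNIV :: (nat \<Rightarrow> bool) set)" and ne: "s \<noteq> t"
    from s obtain a where a: "s = {a}" by (rule imageE) simp
    from t obtain b where b: "t = {b}" by (rule imageE) simp
    show "\<not> s \<subseteq> t" using ne a b by auto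
    show "\<not> t \<subseteq> s" using ne a b by auto
  qed
  fix D assume D: "is_antichain MP D \<and> (\<lambda>x. {x}) ` (UNIV :: (nat \<Rightarrow> bool) set) \<subseteq> D"
  show "D = (\<lambda>x. {x}) ` UNIV"
  proof
    show "(\<lambda>x. {x}) ` UNIV \<subseteq> D" using D by (rule conjE)
    show "D \<subseteq> (\<lambda>x. {x}) ` UNIV"
    proof
      fix d assume d: "d \<in> D"
      have DM: "D \<subseteq> MP" and anti: "\<forall>u\<in>D. \<forall>v\<in>D. u \<noteq> v \<longrightarrow> \<not> u \<subseteq> v \<and> \<not> v \<subseteq> u"
        using D unfolding is_antichain_def by simp_all
      have "d \<in> MP" using DM d by (rule subsetD)
      then have "d \<noteq> {}" by simp
      then obtain x where x: "x \<in> d" by (metis all_not_in_conv)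
      have "{x} \<in> range (\<lambda>x. {x})" by (rule rangeI)
      then have sx: "{x} \<in> D" using D by (meson subsetD)
      have "{x} = d"
      proof (rule ccontr)
        assume "{x} \<noteq> d"
        then have "\<not> {x} \<subseteq> d" using bspec[OF bspec[OF anti sx] d] by simp
        then show False using x by simp
      qed
      then show "d \<in> (\<lambda>x. {x}) ` UNIV" by (metis rangeI)
    qed
  qed
qed

lemma sing_eq: "(\<lambda>x. {x}) ` (UNIV :: (nat \<Rightarrow> bool) set) \<approx> (UNIV :: (nat \<Rightarrow> bool) set)"
proof -
  have "bij_betw (\<lambda>x. {x}) (UNIV :: (nat \<Rightarrow> bool) set) ((\<lambda>x. {x}) ` UNIV)"
    by (simp add: bij_betw_def inj_on_def)
  then have "(UNIV :: (nat \<Rightarrow> bool) set) \<approx> (\<lambda>x. {x}) ` (UNIV :: (nat \<Rightarrow> bool) set)"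
    unfolding eqpoll_def by blast
  then show ?thesis by (rule eqpoll_sym)
qed



unbundle cardinal_syntax

lemma infinite_UNIV_cantor: "\<not> finite (UNIV :: (nat \<Rightarrow> bool) set)"
proof
  assume fin: "finite (UNIV :: (nat \<Rightarrow> bool) set)"
  have inj: "inj (\<lambda>n::nat. \<lambda>i::nat. i = n)"
  proof (rule injI)
    fix x y :: nat assume "(\<lambda>i::nat. i = x) = (\<lambda>i. i = y)"
    then have "(x = x) = (x = y)" by (rule fun_cong)
    then show "x = y" by simp
  qed
  have "finite (range (\<lambda>n::nat. \<lambda>i::nat. i = n))" using fin by (rule finite_subset[rotated]) simp
  then have "finite (UNIV :: nat set)" using inj by (rule finite_imageD)
  then show False by simp
qed

lemma antichain_step:
  fixes A :: "(nat \<Rightarrow> bool) set set" and a P :: "(nat \<Rightarrow> bool) set"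
  assumes Amax: "is_max_antichain MP A" and notbig: "\<not> (UNIV :: (nat \<Rightarrow> bool) set) \<lesssim> A"
    and aA: "a \<in> A" and mP: "meager P" and dis: "P \<inter> a = {}"
    and Peq: "P \<approx> (UNIV :: (nat \<Rightarrow> bool) set)"
  shows "\<exists>f. inj_on f a \<and> f ` a \<subseteq> A \<and> (\<forall>p\<in>a. (UNIV :: (nat \<Rightarrow> bool) set) \<lesssim> f p)"
proof -
  have Aanti: "is_antichain MP A" and Amax': "\<And>D. is_antichain MP D \<and> A \<subseteq> D \<Longrightarrow> D = A"
    using Amax unfolding is_max_antichain_def by blast+
  have AM: "A \<subseteq> MP" and anti: "\<forall>u\<in>A. \<forall>v\<in>A. u \<noteq> v \<longrightarrow> \<not> u \<subseteq> v \<and> \<not> v \<subseteq> u"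
    using Aanti unfolding is_antichain_def by simp_all
  have antiD: "\<not> u \<subseteq> v" if "u \<in> A" "v \<in> A" "u \<noteq> v" for u v
    using bspec[OF bspec[OF anti that(1)] that(2)] that(3) by simp
  have ma: "meager a" using subsetD[OF AM aA] unfolding meager_ideal_def by simp
  define I where "I = {a'\<in>A. a' \<noteq> a \<and> a' \<subseteq> a \<union> P}"
  define qf where "qf a' = (SOME q. q \<in> a' - a)" for a'
  define Q where "Q = qf ` I"
  have qf_in: "qf a' \<in> a' - a" if "a' \<in> I" for a'
  proof -
    have "a' \<in> A" "a' \<noteq> a" using that unfolding I_def by simp_all
    then have "\<not> a' \<subseteq> a" using antiD aA by blast
    then have "\<exists>q. q \<in> a' - a" by blast
    then show ?thesis unfolding qf_def by (rule someI_ex)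
  qed
  have QA: "Q \<lesssim> A"
  proof -
    have "Q \<lesssim> I" unfolding Q_def by (rule image_lepoll)
    also have "I \<lesssim> A" unfolding I_def by (rule subset_imp_lepoll) blast
    finally show ?thesis .
  qed
  have big: "(UNIV :: (nat \<Rightarrow> bool) set) \<lesssim> P - Q"
  proof (rule ccontr)
    assume "\<not> (UNIV :: (nat \<Rightarrow> bool) set) \<lesssim> P - Q"
    then have l1: "|P - Q| <o |UNIV :: (nat \<Rightarrow> bool) set|" using not_lepoll_less by blast
    have l2: "|A| <o |UNIV :: (nat \<Rightarrow> bool) set|" using notbig not_lepoll_less by blast
    have "|Q| \<le>o |A|" using QA lepoll_card by blast
    then have l3: "|Q| <o |UNIV :: (nat \<Rightarrow> bool) set|" using l2 by (rule ordLeq_ordLess_trans)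
    have l4: "|(P - Q) \<union> Q| <o |UNIV :: (nat \<Rightarrow> bool) set|"
      by (rule card_of_Un_ordLess_infinite[OF infinite_UNIV_cantor l1 l3])
    have "(UNIV :: (nat \<Rightarrow> bool) set) \<lesssim> P" using eqpoll_imp_lepoll[OF eqpoll_sym[OF Peq]] .
    also have "P \<lesssim> (P - Q) \<union> Q" by (rule subset_imp_lepoll) blast
    finally have "|UNIV :: (nat \<Rightarrow> bool) set| \<le>o |(P - Q) \<union> Q|" using lepoll_card by blast
    then show False using l4 not_ordLess_ordLeq by blast
  qed
  have PQne: "P - Q \<noteq> {}"
  proof
    assume e: "P - Q = {}"
    from big e have "(UNIV :: (nat \<Rightarrow> bool) set) \<lesssim> ({} :: (nat \<Rightarrow> bool) set)" by (simp only:)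
    then show False by simp
  qed
  have ex: "\<exists>a'. a' \<in> A \<and> (a - {p}) \<union> (P - Q) \<subseteq> a' \<and> p \<notin> a'" if p: "p \<in> a" for p
  proof -
    define B where "B = (a - {p}) \<union> (P - Q)"
    have mB: "meager B"
    proof -
      have "B \<subseteq> a \<union> P" unfolding B_def by blast
      then show ?thesis by (rule meager_subset[OF meager_Un[OF ma mP]])
    qed
    have PQB: "P - Q \<subseteq> B" unfolding B_def by blast
    have Bne: "B \<noteq> {}" using PQne PQB by blast
    have pP: "p \<notin> P" using p dis by blast
    have pB: "p \<notin> B" unfolding B_def using pP by blast
    have BMP: "B \<in> MP" using mB Bne unfolding meager_ideal_def by simp
    show ?thesis
    proof (cases "B \<in> A")
      case True then show ?thesis using pB unfolding B_def by blast
    next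
      case False
      have "\<exists>a'\<in>A. a' \<noteq> B \<and> (a' \<subseteq> B \<or> B \<subseteq> a')"
      proof (rule ccontr)
        assume H: "\<not> (\<exists>a'\<in>A. a' \<noteq> B \<and> (a' \<subseteq> B \<or> B \<subseteq> a'))"
        have "is_antichain MP (insert B A)"
          unfolding is_antichain_def
        proof (intro conjI ballI impI)
          show "insert B A \<subseteq> MP" using AM BMP by blast
          fix u v assume u: "u \<in> insert B A" and v: "v \<in> insert B A" and uv: "u \<noteq> v"
          show "\<not> u \<subseteq> v"
          proof (cases "u = B")
            case True
            then have "v \<in> A" using v uv by blast
            then show ?thesis using H True uv by blast
          next
            case False
            then have uA: "u \<in> A" using u by blast
            show ?thesis
            proof (cases "v = B")
              case True then show ?thesis using H uA uv by blast
            next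
              case False then have "v \<in> A" using v by blast
              then show ?thesis using antiD uA uv by blast
            qed
          qed
          show "\<not> v \<subseteq> u"
          proof (cases "v = B")
            case True
            then have "u \<in> A" using u uv by blast
            then show ?thesis using H True uv by blast
          next
            case False
            then have vA: "v \<in> A" using v by blast
            show ?thesis
            proof (cases "u = B")
              case True then show ?thesis using H vA uv by blast
            next
              case False then have "u \<in> A" using u by blast
              then show ?thesis using antiD vA uv by blast
            qed
          qed
        qed
        then have "insert B A = A" using Amax' by blast
        then show False using False by blast
      qed
      then obtain a' where a'A: "a' \<in> A" and a'B: "a' \<noteq> B" and cmp: "a' \<subseteq> B \<or> B \<subseteq> a'" by blast
      show ?thesis
      proof (cases "a' \<subseteq> B")
        case True
        have "a' \<noteq> a" using True pB p by blast
        moreover have "a' \<subseteq> a \<union> P" using True unfolding B_def by blast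
        ultimately have "a' \<in> I" unfolding I_def using a'A by blast
        then have q: "qf a' \<in> a' - a" "qf a' \<in> Q" using qf_in unfolding Q_def by blast+
        then have "qf a' \<in> B" using True by blast
        then have "qf a' \<in> P - Q" using q(1) unfolding B_def by blast
        then show ?thesis using q(2) by blast
      next
        case False
        then have Ba': "B \<subseteq> a'" using cmp by blast
        have "p \<notin> a'"
        proof
          assume "p \<in> a'"
          then have "a \<subseteq> a'" using Ba' unfolding B_def by blast
          then have "a = a'" using antiD aA a'A by blast
          then have "P - Q \<subseteq> a" using Ba' PQB by blast
          then show False using dis PQne by blast
        qed
        then show ?thesis using a'A Ba' unfolding B_def by blast
      qed
    qed
  qed
  define f where "f p = (SOME a'. a' \<in> A \<and> (a - {p}) \<union> (P - Q) \<subseteq> a' \<and> p \<notin> a')" for p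
  have fp: "f p \<in> A \<and> (a - {p}) \<union> (P - Q) \<subseteq> f p \<and> p \<notin> f p" if "p \<in> a" for p
    unfolding f_def using ex[OF that] by (rule someI_ex)
  have "inj_on f a"
  proof (rule inj_onI, rule ccontr)
    fix p p' assume p: "p \<in> a" and p': "p' \<in> a" and eq: "f p = f p'" and ne: "p \<noteq> p'"
    have "p \<in> f p'" using fp[OF p'] p ne by blast
    then show False using fp[OF p] eq by simp
  qed
  moreover have "f ` a \<subseteq> A" using fp by blast
  moreover have "\<forall>p\<in>a. (UNIV :: (nat \<Rightarrow> bool) set) \<lesssim> f p"
  proof
    fix p assume p: "p \<in> a"
    have "P - Q \<lesssim> f p" by (rule subset_imp_lepoll) (use fp[OF p] in blast)
    with big show "(UNIV :: (nat \<Rightarrow> bool) set) \<lesssim> f p" by (rule lepoll_trans)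
  qed
  ultimately show ?thesis by blast
qed



unbundle cardinal_syntax

lemma antichain_lower:
  fixes A :: "(nat \<Rightarrow> bool) set set"
  assumes Amax: "is_max_antichain MP A"
  shows "(UNIV :: (nat \<Rightarrow> bool) set) \<lesssim> A"
proof (rule ccontr)
  assume nb: "\<not> (UNIV :: (nat \<Rightarrow> bool) set) \<lesssim> A"
  have Aanti: "is_antichain MP A" and Amax': "\<And>D. is_antichain MP D \<and> A \<subseteq> D \<Longrightarrow> D = A"
    using Amax unfolding is_max_antichain_def by blast+
  have AM: "A \<subseteq> MP" using Aanti unfolding is_antichain_def by simp
  have "A \<noteq> {}"
  proof
    assume A0: "A = {}"
    fix x0 :: "nat \<Rightarrow> bool"
    have "{x0} \<in> MP" using meager_singleton[of x0] unfolding meager_ideal_def by simp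
    then have "is_antichain MP {{x0}}" unfolding is_antichain_def by simp
    then have "{{x0}} = A" using Amax' A0 by blast
    then show False using A0 by simp
  qed
  then obtain a0 where a0: "a0 \<in> A" by blast
  have a0M: "a0 \<in> MP" using AM a0 by (rule subsetD)
  then have ma0: "meager a0" and ne0: "a0 \<noteq> {}" unfolding meager_ideal_def by simp_all
  obtain P0 :: "(nat \<Rightarrow> bool) set" where P0: "meager P0" "P0 \<inter> a0 = {}" "P0 \<approx> (UNIV :: (nat \<Rightarrow> bool) set)"
    using meager_avoid[OF ma0] by blast
  obtain f0 where f0: "inj_on f0 a0" "f0 ` a0 \<subseteq> A" "\<forall>p\<in>a0. (UNIV :: (nat \<Rightarrow> bool) set) \<lesssim> f0 p"
    using antichain_step[OF Amax nb a0 P0(1) P0(2) P0(3)] by blast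
  obtain p0 where p0: "p0 \<in> a0" using ne0 by blast
  define a1 where "a1 = f0 p0"
  have a1: "a1 \<in> A" using f0(2) p0 unfolding a1_def by blast
  have big1: "(UNIV :: (nat \<Rightarrow> bool) set) \<lesssim> a1" using f0(3) p0 unfolding a1_def by blast
  have ma1: "meager a1" using subsetD[OF AM a1] unfolding meager_ideal_def by simp
  obtain P1 :: "(nat \<Rightarrow> bool) set" where P1: "meager P1" "P1 \<inter> a1 = {}" "P1 \<approx> (UNIV :: (nat \<Rightarrow> bool) set)"
    using meager_avoid[OF ma1] by blast
  obtain f1 where f1: "inj_on f1 a1" "f1 ` a1 \<subseteq> A"
    using antichain_step[OF Amax nb a1 P1(1) P1(2) P1(3)] by blast
  have "a1 \<lesssim> A" unfolding lepoll_def using f1 by blast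
  with big1 have "(UNIV :: (nat \<Rightarrow> bool) set) \<lesssim> A" by (rule lepoll_trans)
  with nb show False by simp
qed

theorem mainTheorem16:
  shows "(\<exists>C N. is_max_chain meager_ideal C
              \<and> (\<forall>C'. is_max_chain meager_ideal C' \<longrightarrow> C \<lesssim> C')
              \<and> \<not> meager N
              \<and> (\<forall>N'. \<not> meager N' \<longrightarrow> N \<lesssim> N')
              \<and> C \<approx> N)
       \<and> (\<exists>A. is_max_antichain (meager_ideal - {{}}) A
              \<and> (\<forall>A'. is_max_antichain (meager_ideal - {{}}) A' \<longrightarrow> A \<lesssim> A')
              \<and> A \<approx> (UNIV :: (nat \<Rightarrow> bool) set))"
proof (rule conjI)
  obtain N :: "(nat \<Rightarrow> bool) set" where N: "\<not> meager N" and Nmin: "\<And>N'. \<not> meager N' \<Longrightarrow> N \<lesssim> N'"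
    using minimal_nonmeager by metis
  obtain C where C: "is_max_chain meager_ideal C" and CN: "C \<lesssim> N"
    using chain_exists[OF N Nmin] by blast
  have lowC: "N \<lesssim> C'" if C': "is_max_chain meager_ideal C'" for C'
  proof -
    have "N \<lesssim> \<Union>C'" by (rule Nmin[OF maxchain_union_nonmeager[OF C']])
    also have "\<Union>C' \<lesssim> C'" by (rule maxchain_union_lepoll[OF C'])
    finally show ?thesis .
  qed
  have "\<forall>C'. is_max_chain meager_ideal C' \<longrightarrow> C \<lesssim> C'"
  proof (intro allI impI)
    fix C' assume "is_max_chain meager_ideal C'"
    then have "N \<lesssim> C'" by (rule lowC)
    with CN show "C \<lesssim> C'" by (rule lepoll_trans)
  qed
  moreover have "C \<approx> N" by (rule lepoll_antisym[OF CN lowC[OF C]])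
  moreover have "\<forall>N'. \<not> meager N' \<longrightarrow> N \<lesssim> N'" using Nmin by blast
  ultimately show "\<exists>C N. is_max_chain meager_ideal C
              \<and> (\<forall>C'. is_max_chain meager_ideal C' \<longrightarrow> C \<lesssim> C')
              \<and> \<not> meager N
              \<and> (\<forall>N'. \<not> meager N' \<longrightarrow> N \<lesssim> N')
              \<and> C \<approx> N" using C N by blast
next
  let ?S = "(\<lambda>x. {x}) ` (UNIV :: (nat \<Rightarrow> bool) set)"
  have "\<forall>A'. is_max_antichain (meager_ideal - {{}}) A' \<longrightarrow> ?S \<lesssim> A'"
  proof (intro allI impI)
    fix A' :: "(nat \<Rightarrow> bool) set set" assume "is_max_antichain (meager_ideal - {{}}) A'"
    then have "(UNIV :: (nat \<Rightarrow> bool) set) \<lesssim> A'" by (rule antichain_lower)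
    with sing_eq show "?S \<lesssim> A'" by (rule lepoll_trans1)
  qed
  then show "\<exists>A. is_max_antichain (meager_ideal - {{}}) A
              \<and> (\<forall>A'. is_max_antichain (meager_ideal - {{}}) A' \<longrightarrow> A \<lesssim> A')
              \<and> A \<approx> (UNIV :: (nat \<Rightarrow> bool) set)" using sing_max sing_eq by blast
qed


end
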